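(* Let $T>0$ and let $\Gamma:\Delta_T\to\mathbb{R}_+$ be a double kernel that preserves nonnegativity on $[0,T]$ and such that $\Gamma(s,s)=\gamma>0$ is constant for $s\in[0,T]$. Then the double kernel $\tilde\Gamma(t,s)=\Gamma(T-s,T-t)$, $(t,s)\in\Delta_T$, preserves nonnegativity on $[0,T]$.
   Context: $\Delta_T=\{(t,s):0\le s\le t\le T\}$. $\Gamma:\Delta_T\to\mathbb{R}_+$ preserves nonnegativity on $[0,T]$ if for any $K\in\mathbb{N}^*$, $x_1,\dots,x_K\in\mathbb{R}$ and $0\le t_1<\dots<t_K<T$ with $\sum_{k'=1}^kx_{k'}\Gamma(t_k,t_{k'})\ge0$ for all $k$, one has $\sum_{k:t_k\le t}x_k\Gamma(t,t_k)\ge0$ for all $t\in[0,T]$. *)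

theory Defs
  imports Complex_Main
begin

text \<open>Delta_T = {(t,s). 0 <= s <= t <= T}. A double kernel is a function of two real
  arguments; only its values on Delta_T matter.\<close>

definition Delta :: "real \<Rightarrow> (real \<times> real) set" where
  "Delta T = {(t, s). 0 \<le> s \<and> s \<le> t \<and> t \<le> T}"

definition preserves_nonneg :: "real \<Rightarrow> (real \<Rightarrow> real \<Rightarrow> real) \<Rightarrow> bool" where
  "preserves_nonneg T \<Gamma> \<longleftrightarrow>
    (\<forall>(K::nat) (x::nat \<Rightarrow> real) (tt::nat \<Rightarrow> real).
       1 \<le> K \<longrightarrow> 0 \<le> tt 1 \<longrightarrow> (\<forall>k\<in>{1..<K}. tt k < tt (Suc k)) \<longrightarrow> tt K < T \<longrightarrow>
       (\<forall>k\<in>{1..K}. 0 \<le> (\<Sum>k'=1..k. x k' * \<Gamma> (tt k) (tt k'))) \<longrightarrow>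
       (\<forall>t\<in>{0..T}. 0 \<le> (\<Sum>k\<in>{k\<in>{1..K}. tt k \<le> t}. x k * \<Gamma> t (tt k))))"

end

theory Submission imports Defs begin
lemma strict_grid:
  fixes u :: "nat \<Rightarrow> real"
  assumes "\<forall>k\<in>{1..<n}. u k < u (Suc k)" "1 \<le> i" "i < j" "j \<le> n"
  shows "u i < u j"
  using assms(3,4)
proof (induction j)
  case 0 then show ?case by simp
next
  case (Suc j)
  have s: "u j < u (Suc j)" using assms(1,2) Suc.prems by auto
  show ?case
  proof (cases "i = j")
    case True then show ?thesis using s by simp
  next
    case False then have "u i < u j" using Suc by auto
    then show ?thesis using s by simp
  qed
qed

lemma vexists:
  fixes u :: "nat \<Rightarrow> real" and \<gamma> :: real and \<Gamma> :: "real \<Rightarrow> real \<Rightarrow> real"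
  assumes "\<gamma> > 0" "\<forall>i\<in>{1..n}. \<Gamma> (u i) (u i) = \<gamma>" "N \<le> n"
  shows "\<exists>v. v 1 = 1/\<gamma> \<and> (\<forall>i\<in>{2..N}. (\<Sum>k=1..i. v k * \<Gamma> (u i) (u k)) = 0)"
  using assms(3)
proof (induction N)
  case 0 then show ?case by auto
next
  case (Suc N)
  show ?case
  proof (cases "N = 0")
    case True then show ?thesis by auto
  next
    case False
    obtain v where v1: "v 1 = 1/\<gamma>" and vi: "\<forall>i\<in>{2..N}. (\<Sum>k=1..i. v k * \<Gamma> (u i) (u k)) = 0"
      using Suc by auto
    define v' where "v' = v(Suc N := - (\<Sum>k=1..N. v k * \<Gamma> (u (Suc N)) (u k)) / \<gamma>)"
    have "v' 1 = 1/\<gamma>" using False v1 v'_def by auto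
    moreover have "(\<Sum>k=1..i. v' k * \<Gamma> (u i) (u k)) = 0" if "i \<in> {2..Suc N}" for i
    proof (cases "i = Suc N")
      case True
      have "(\<Sum>k=1..i. v' k * \<Gamma> (u i) (u k)) = (\<Sum>k=1..N. v' k * \<Gamma> (u i) (u k)) + v' (Suc N) * \<Gamma> (u i) (u i)"
        using True by simp
      also have "(\<Sum>k=1..N. v' k * \<Gamma> (u i) (u k)) = (\<Sum>k=1..N. v k * \<Gamma> (u i) (u k))"
        by (rule sum.cong) (auto simp: v'_def)
      also have "\<Gamma> (u i) (u i) = \<gamma>" using assms(2) Suc.prems True by auto
      finally show ?thesis using True assms(1) by (simp add: v'_def)
    next
      case False
      then have "i \<in> {2..N}" using that by auto
      have "(\<Sum>k=1..i. v' k * \<Gamma> (u i) (u k)) = (\<Sum>k=1..i. v k * \<Gamma> (u i) (u k))"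
        by (rule sum.cong) (use \<open>i \<in> {2..N}\<close> in \<open>auto simp: v'_def\<close>)
      then show ?thesis using vi \<open>i \<in> {2..N}\<close> by simp
    qed
    ultimately show ?thesis by blast
  qed
qed

lemma core:
  fixes u y :: "nat \<Rightarrow> real"
  assumes pn: "preserves_nonneg T \<Gamma>" and gp: "\<gamma> > 0" and diag: "\<forall>s\<in>{0..T}. \<Gamma> s s = \<gamma>"
    and n1: "1 \<le> n" and mono: "\<forall>k\<in>{1..<n}. u k < u (Suc k)" and u1: "0 \<le> u 1" and un: "u n \<le> T"
    and hy: "\<forall>j\<in>{2..n}. 0 \<le> (\<Sum>i=j..n. y i * \<Gamma> (u i) (u j))"
  shows "0 \<le> (\<Sum>i=2..n. y i * \<Gamma> (u i) (u 1))"
proof -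
  have sg: "u i < u j" if "1 \<le> i" "i < j" "j \<le> n" for i j
    using strict_grid[OF mono that] .
  have urange: "u i \<in> {0..T}" if "i \<in> {1..n}" for i
  proof -
    have "u 1 \<le> u i" using sg[of 1 i] that by (cases "i = 1") auto
    moreover have "u i \<le> u n" using sg[of i n] that by (cases "i = n") auto
    ultimately show ?thesis using u1 un by auto
  qed
  have dg: "\<forall>i\<in>{1..n}. \<Gamma> (u i) (u i) = \<gamma>" using diag urange by auto
  obtain v where v1: "v 1 = 1/\<gamma>" and vi: "\<forall>i\<in>{2..n}. (\<Sum>k=1..i. v k * \<Gamma> (u i) (u k)) = 0"
    using vexists[where u=u and \<Gamma>=\<Gamma> and n=n and N=n, OF gp dg order.refl] by blast
  have vneg: "v i \<le> 0" if i: "i \<in> {2..n}" for i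
  proof -
    let ?K = "i - 1"
    have A: "1 \<le> ?K" using i by auto
    have B: "\<forall>k\<in>{1..<?K}. u k < u (Suc k)" using mono i by auto
    have C: "u ?K < T" using sg[of ?K i] i urange[of i] by fastforce
    have D: "\<forall>k\<in>{1..?K}. 0 \<le> (\<Sum>k'=1..k. v k' * \<Gamma> (u k) (u k'))"
    proof
      fix k assume k: "k \<in> {1..?K}"
      show "0 \<le> (\<Sum>k'=1..k. v k' * \<Gamma> (u k) (u k'))"
      proof (cases "k = 1")
        case True then show ?thesis using v1 dg n1 gp by simp
      next
        case False then have "k \<in> {2..n}" using k i by auto
        then show ?thesis using vi by simp
      qed
    qed
    have E: "u i \<in> {0..T}" using urange i by auto
    have F: "0 \<le> (\<Sum>k\<in>{k\<in>{1..?K}. u k \<le> u i}. v k * \<Gamma> (u i) (u k))"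
      using pn A u1 B C D E unfolding preserves_nonneg_def by blast
    have "{k\<in>{1..?K}. u k \<le> u i} = {1..?K}" using sg[of _ i] i by fastforce
    with F have G: "0 \<le> (\<Sum>k=1..?K. v k * \<Gamma> (u i) (u k))" by simp
    have "(\<Sum>k=1..i. v k * \<Gamma> (u i) (u k)) = (\<Sum>k=1..?K. v k * \<Gamma> (u i) (u k)) + v i * \<Gamma> (u i) (u i)"
      using i sum.atLeast_Suc_atMost[of 1 i] by (cases i) (auto simp: add.commute)
    then have "v i * \<gamma> \<le> 0" using vi i G dg by auto
    then show ?thesis using gp by (simp add: mult_le_0_iff)
  qed
  define g where "g j i = v j * (y i * \<Gamma> (u i) (u j))" for j i
  have sw: "(\<Sum>j\<in>{1..n}. \<Sum>i\<in>{i\<in>{2..n}. j \<le> i}. g j i) = (\<Sum>i\<in>{2..n}. \<Sum>j\<in>{j\<in>{1..n}. j \<le> i}. g j i)"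
    by (rule sum.swap_restrict) auto
  have r: "(\<Sum>i\<in>{2..n}. \<Sum>j\<in>{j\<in>{1..n}. j \<le> i}. g j i) = 0"
  proof (rule sum.neutral, rule ballI)
    fix i assume i: "i \<in> {2..n}"
    have "{j\<in>{1..n}. j \<le> i} = {1..i}" using i by auto
    then have "(\<Sum>j\<in>{j\<in>{1..n}. j \<le> i}. g j i) = y i * (\<Sum>k=1..i. v k * \<Gamma> (u i) (u k))"
      by (simp add: g_def sum_distrib_left algebra_simps)
    then show "(\<Sum>j\<in>{j\<in>{1..n}. j \<le> i}. g j i) = 0" using vi i by simp
  qed
  have l: "(\<Sum>j\<in>{1..n}. \<Sum>i\<in>{i\<in>{2..n}. j \<le> i}. g j i)
      = v 1 * (\<Sum>i=2..n. y i * \<Gamma> (u i) (u 1)) + (\<Sum>j=2..n. v j * (\<Sum>i=j..n. y i * \<Gamma> (u i) (u j)))"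
  proof -
    have "(\<Sum>j\<in>{1..n}. \<Sum>i\<in>{i\<in>{2..n}. j \<le> i}. g j i)
        = (\<Sum>i\<in>{i\<in>{2..n}. 1 \<le> i}. g 1 i) + (\<Sum>j=2..n. \<Sum>i\<in>{i\<in>{2..n}. j \<le> i}. g j i)"
      using n1 sum.atLeast_Suc_atMost[of 1 n] by (simp add: numeral_2_eq_2)
    also have "{i\<in>{2..n}. 1 \<le> i} = {2..n}" by auto
    also have "(\<Sum>j=2..n. \<Sum>i\<in>{i\<in>{2..n}. j \<le> i}. g j i) = (\<Sum>j=2..n. \<Sum>i=j..n. g j i)"
      by (rule sum.cong) (auto intro!: sum.cong)
    finally show ?thesis by (simp add: g_def sum_distrib_left)
  qed
  have nonpos: "(\<Sum>j=2..n. v j * (\<Sum>i=j..n. y i * \<Gamma> (u i) (u j))) \<le> 0"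
    by (rule sum_nonpos) (use vneg hy in \<open>auto simp: mult_le_0_iff\<close>)
  have "v 1 * (\<Sum>i=2..n. y i * \<Gamma> (u i) (u 1)) \<ge> 0" using sw r l nonpos by linarith
  then show ?thesis using v1 gp by (simp add: zero_le_mult_iff)
qed

lemma rev_sum:
  fixes f :: "nat \<Rightarrow> real"
  assumes "2 \<le> j" "j \<le> Suc m"
  shows "(\<Sum>i=j..Suc m. f (m + 2 - i)) = (\<Sum>k=1..m+2-j. f k)"
  by (rule sum.reindex_bij_witness[where i="\<lambda>k. m + 2 - k" and j="\<lambda>k. m + 2 - k"]) (use assms in auto)

theorem corollaryC:
  fixes T \<gamma> :: real and \<Gamma> :: "real \<Rightarrow> real \<Rightarrow> real"
  assumes "T > 0"
    and "\<forall>(t, s)\<in>Delta T. 0 \<le> \<Gamma> t s"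
    and "preserves_nonneg T \<Gamma>"
    and "\<gamma> > 0"
    and "\<forall>s\<in>{0..T}. \<Gamma> s s = \<gamma>"
  shows "preserves_nonneg T (\<lambda>t s. \<Gamma> (T - s) (T - t))"
  unfolding preserves_nonneg_def
proof (intro allI impI ballI)
  fix K :: nat and x tt :: "nat \<Rightarrow> real" and t :: real
  assume h1: "1 \<le> K" and h0: "0 \<le> tt 1" and hm: "\<forall>k\<in>{1..<K}. tt k < tt (Suc k)"
    and hT: "tt K < T"
    and hp: "\<forall>k\<in>{1..K}. 0 \<le> (\<Sum>k'=1..k. x k' * \<Gamma> (T - tt k') (T - tt k))"
    and ht: "t \<in> {0..T}"
  let ?S = "{k\<in>{1..K}. tt k \<le> t}"
  have sg: "tt i < tt j" if "1 \<le> i" "i < j" "j \<le> K" for i j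
    using strict_grid[OF hm that] .
  show "0 \<le> (\<Sum>k\<in>?S. x k * \<Gamma> (T - tt k) (T - t))"
  proof (cases "?S = {}")
    case True then show ?thesis by (simp only: True sum.empty order.refl)
  next
    case False
    define m where "m = Max ?S"
    have fin: "finite ?S" by simp
    have mS: "m \<in> ?S" using Max_in[OF fin False] m_def by simp
    have Seq: "?S = {1..m}"
    proof
      show "?S \<subseteq> {1..m}" using Max_ge[OF fin] m_def by auto
      show "{1..m} \<subseteq> ?S"
      proof
        fix k assume k: "k \<in> {1..m}"
        have "tt k \<le> tt m" using sg[of k m] k mS by (cases "k = m") auto
        then show "k \<in> ?S" using k mS by auto
      qed
    qed
    have m1: "1 \<le> m" "m \<le> K" "tt m \<le> t" using mS by auto
    show ?thesis
    proof (cases "tt m = t")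
      case True
      then show ?thesis using Seq hp m1 by auto
    next
      case False
      then have ltm: "tt m < t" using m1 by simp
      define u where "u j = (if j = 1 then T - t else T - tt (m + 2 - j))" for j
      define y where "y j = x (m + 2 - j)" for j
      have mono: "\<forall>k\<in>{1..<Suc m}. u k < u (Suc k)"
      proof
        fix k assume k: "k \<in> {1..<Suc m}"
        show "u k < u (Suc k)"
        proof (cases "k = 1")
          case True then show ?thesis using ltm by (simp add: u_def)
        next
          case False
          then have "m + 1 - k \<in> {1..<K}" using k m1 by auto
          then have "tt (m + 1 - k) < tt (Suc (m + 1 - k))" using hm by blast
          moreover have "Suc (m + 1 - k) = m + 2 - k" using k False by auto
          moreover have "m + 2 - Suc k = m + 1 - k" by simp
          ultimately show ?thesis using False k by (simp add: u_def)
        qed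
      qed
      have u1: "0 \<le> u 1" using ht by (simp add: u_def)
      have un: "u (Suc m) \<le> T" using h0 m1 by (simp add: u_def)
      have hy: "\<forall>j\<in>{2..Suc m}. 0 \<le> (\<Sum>i=j..Suc m. y i * \<Gamma> (u i) (u j))"
      proof
        fix j assume j: "j \<in> {2..Suc m}"
        have "(\<Sum>i=j..Suc m. y i * \<Gamma> (u i) (u j))
            = (\<Sum>i=j..Suc m. (\<lambda>k. x k * \<Gamma> (T - tt k) (T - tt (m + 2 - j))) (m + 2 - i))"
          by (rule sum.cong) (use j in \<open>auto simp: u_def y_def\<close>)
        also have "\<dots> = (\<Sum>k=1..m+2-j. x k * \<Gamma> (T - tt k) (T - tt (m + 2 - j)))"
          using rev_sum j by auto
        also have "\<dots> \<ge> 0"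
        proof -
          have "m + 2 - j \<in> {1..K}" using j m1 by auto
          then show ?thesis using hp by blast
        qed
        finally show "0 \<le> (\<Sum>i=j..Suc m. y i * \<Gamma> (u i) (u j))" .
      qed
      have c: "0 \<le> (\<Sum>i=2..Suc m. y i * \<Gamma> (u i) (u 1))"
        using core[OF assms(3) assms(4) assms(5) _ mono u1 un hy] by simp
      have "(\<Sum>i=2..Suc m. y i * \<Gamma> (u i) (u 1))
          = (\<Sum>i=2..Suc m. (\<lambda>k. x k * \<Gamma> (T - tt k) (T - t)) (m + 2 - i))"
        by (rule sum.cong) (auto simp: u_def y_def)
      also have "\<dots> = (\<Sum>k=1..m. x k * \<Gamma> (T - tt k) (T - t))"
        using rev_sum[of 2 m] m1 by auto
      finally show ?thesis using c Seq by simp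
    qed
  qed
qed

end
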